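(* Let $(\mathbb{X},d_{\mathbb{X}})$ and $(\Xi,d_\Xi)$ be metric spaces, and let $P$, $P^\nu$ ($\nu\in\mathbb{N}$) be probability measures on $(\Xi,\mathcal{B}(\Xi))$ with $P^\nu$ converging weakly to $P$. Let $f,f^\nu:\Xi\times\mathbb{X}\to\overline{\mathbb{R}}$ satisfy, for each $x\in\mathbb{X}$: (a) $f(\cdot,x)$ and $f^\nu(\cdot,x)$, $\nu\in\mathbb{N}$, are measurable; (b) $\displaystyle\liminf_{K\to+\infty}\ \liminf_{(\nu,y)\to(+\infty,x)}\mathbb{E}^{P^\nu}\big[f^\nu(\xi,y)\,\mathbb{1}\{\xi:f^\nu(\xi,y)\le -K\}\big]=0$; (c) for $P$-a.e. $\xi\in\Xi$, $\displaystyle\liminf_{(\nu,y,\zeta)\to(+\infty,x,\xi)}f^\nu(\zeta,y)\ge f(\xi,x)$. Suppose moreover that for each $x\in\mathbb{X}$ either $E^P[f](x)=+\infty$ or there exists a sequence $\{x^\nu\}_{\nu\in\mathbb{N}}\subset\mathbb{X}$ converging to $x$ such that (i) $\displaystyle\limsup_{K\to+\infty}\ \limsup_{\nu\to+\infty}\mathbb{E}^{P^\nu}\big[f^\nu(\xi,x^\nu)\,\mathbb{1}\{\xi:f^\nu(\xi,x^\nu)\ge K\}\big]=0$; (ii) for $P$-a.e. $\xi\in\Xi$, $\displaystyle\limsup_{(\nu,\zeta)\to(+\infty,\xi)}f^\nu(\zeta,x^\nu)\le f(\xi,x)$. Then the functions $E^{P^\nu}[f^\nu]$ epi-converge to $E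^{P}[f]$.
   Context: $\overline{\mathbb{R}}=\mathbb{R}\cup\{-\infty,+\infty\}$; weak convergence means $\int\varphi\,dP^\nu\to\int\varphi\,dP$ for all bounded continuous $\varphi$. For a probability $\mu$ and measurable $\overline{\mathbb{R}}$-valued $g$, $\mathbb{E}^\mu[g]:=\int g_+\,d\mu-\int g_-\,d\mu$ with conventions $+\infty-\alpha=+\infty$ for all $\alpha\in\overline{\mathbb{R}}$ and $\beta-(+\infty)=-\infty$ for $\beta\in\mathbb{R}$; $E^{Q}[h](x):=\mathbb{E}^{Q}[h(\xi,x)]$. $\mathbb{1}\{B\}$ is the indicator. Lower/upper limits: $\liminf_{(\nu,y)\to(+\infty,x)}a^\nu(y):=\lim_{\delta\downarrow0}\lim_{N\to\infty}\inf\{a^\nu(y):\nu\ge N, d_{\mathbb{X}}(y,x)<\delta\}$; $\liminf_{(\nu,y,\zeta)\to(+\infty,x,\xi)}f^\nu(\zeta,y)$ is defined analogously with $d_{\mathbb{X}}(y,x)<\delta$ and $d_\Xi(\zeta,\xi)<\delta$; $\limsup_{(\nu,\zeta)\to(+\infty,\xi)}a^\nu(\zeta):=\lim_{\delta\downarrow0}\lim_{N\to\infty}\sup\{a^\nu(\zeta):\nu\ge N, d_\Xi(\zeta,\xi)<\delta\}$. Functions $h^\nu:\mathbb{X}\to\overline{\mathbb{R}}$ epi-converge to $h$ if for every $x$: for every $x^\nu\to x$, $h(x)\le\liminf_\nu h^\nu(x^\nu)$, and there exists $x^\nu\to x$ with $h^\nu(x^\nu)\to h(x)$. *)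

theory Defs
  imports "HOL-Probability.Probability"
begin

text \<open>Extended expectation E^mu[g] = int g_+ - int g_-, with the conventions
  +inf - a = +inf for all a, and b - (+inf) = -inf for finite b.\<close>
definition eexp :: "'a measure \<Rightarrow> ('a \<Rightarrow> ereal) \<Rightarrow> ereal" where
  "eexp M g =
    (let p = (\<integral>\<^sup>+ x. e2ennreal (max 0 (g x)) \<partial>M);
         n = (\<integral>\<^sup>+ x. e2ennreal (max 0 (- g x)) \<partial>M)
     in if p = \<infinity> then \<infinity> else enn2ereal p - enn2ereal n)"

definition weak_conv :: "(nat \<Rightarrow> 'a::metric_space measure) \<Rightarrow> 'a measure \<Rightarrow> bool" where
  "weak_conv Ps P \<longleftrightarrow>
     (\<forall>\<phi>::'a \<Rightarrow> real. continuous_on UNIV \<phi> \<and> bounded (range \<phi>) \<longrightarrow>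
        (\<lambda>\<nu>. integral\<^sup>L (Ps \<nu>) \<phi>) \<longlonglongrightarrow> integral\<^sup>L P \<phi>)"

text \<open>liminf_{(nu,y) -> (+inf,x)} a nu y
  = lim_{delta->0} lim_{N->inf} inf {a nu y : nu >= N, d(y,x) < delta};
  both limits are of monotone families, hence suprema.\<close>
definition liminf2 :: "(nat \<Rightarrow> 'x::metric_space \<Rightarrow> ereal) \<Rightarrow> 'x \<Rightarrow> ereal" where
  "liminf2 a x = (SUP \<delta>\<in>{0<..}. SUP N. INF \<nu>\<in>{N..}. INF y\<in>{y. dist y x < \<delta>}. a \<nu> y)"

definition liminf3 :: "(nat \<Rightarrow> 'x::metric_space \<Rightarrow> 'c::metric_space \<Rightarrow> ereal) \<Rightarrow> 'x \<Rightarrow> 'c \<Rightarrow> ereal" where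
  "liminf3 a x \<xi> = (SUP \<delta>\<in>{0<..}. SUP N. INF \<nu>\<in>{N..}.
      INF y\<in>{y. dist y x < \<delta>}. INF \<zeta>\<in>{\<zeta>. dist \<zeta> \<xi> < \<delta>}. a \<nu> y \<zeta>)"

definition limsup2 :: "(nat \<Rightarrow> 'c::metric_space \<Rightarrow> ereal) \<Rightarrow> 'c \<Rightarrow> ereal" where
  "limsup2 a \<xi> = (INF \<delta>\<in>{0<..}. INF N. SUP \<nu>\<in>{N..}. SUP \<zeta>\<in>{\<zeta>. dist \<zeta> \<xi> < \<delta>}. a \<nu> \<zeta>)"

definition epi_converges :: "(nat \<Rightarrow> 'x::metric_space \<Rightarrow> ereal) \<Rightarrow> ('x \<Rightarrow> ereal) \<Rightarrow> bool" where
  "epi_converges hs h \<longleftrightarrow>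
     (\<forall>x. (\<forall>xs. xs \<longlonglongrightarrow> x \<longrightarrow> h x \<le> liminf (\<lambda>\<nu>. hs \<nu> (xs \<nu>))) \<and>
          (\<exists>xs. xs \<longlonglongrightarrow> x \<and> (\<lambda>\<nu>. hs \<nu> (xs \<nu>)) \<longlonglongrightarrow> h x))"

end

theory Submission
  imports Defs
begin

definition phi :: "(nat \<Rightarrow> 'c::metric_space \<Rightarrow> ereal) \<Rightarrow> nat \<Rightarrow> 'c \<Rightarrow> ereal" where
  "phi u m \<xi> = (INF \<nu>\<in>{m..}. INF \<zeta>\<in>{\<zeta>. dist \<zeta> \<xi> < 1 / real (Suc m)}. u \<nu> \<zeta>)"

definition psi :: "(nat \<Rightarrow> 'c::metric_space \<Rightarrow> ereal) \<Rightarrow> 'c \<Rightarrow> ereal" where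
  "psi u \<xi> = (SUP m. phi u m \<xi>)"

definition gg :: "(nat \<Rightarrow> 'c::metric_space \<Rightarrow> ereal) \<Rightarrow> nat \<Rightarrow> 'c \<Rightarrow> real" where
  "gg u n \<zeta> = real_of_ereal (min (phi u n \<zeta>) (ereal (real n)))"

definition lam :: "(nat \<Rightarrow> 'c::metric_space \<Rightarrow> ereal) \<Rightarrow> nat \<Rightarrow> 'c \<Rightarrow> real" where
  "lam u n \<xi> = (INF \<zeta>. gg u n \<zeta> + real n * dist \<xi> \<zeta>)"

lemma phi_nonneg: assumes "\<forall>\<nu> \<zeta>. 0 \<le> u \<nu> \<zeta>" shows "0 \<le> phi u m \<xi>"
  unfolding phi_def using assms by (auto intro!: INF_greatest)

lemma phi_le_u: "m \<le> \<nu> \<Longrightarrow> phi u m \<zeta> \<le> u \<nu> \<zeta>"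
  unfolding phi_def by (rule INF_lower2[of \<nu>]) (auto intro!: INF_lower)

lemma ereal_real_mid: "0 \<le> (G::ereal) \<Longrightarrow> G \<le> ereal b \<Longrightarrow> ereal (real_of_ereal G) = G"
  by (cases G) auto

lemma gg_props: assumes "\<forall>\<nu> \<zeta>. 0 \<le> u \<nu> \<zeta>"
  shows "0 \<le> gg u n \<zeta>" "gg u n \<zeta> \<le> real n"
    "ereal (gg u n \<zeta>) = min (phi u n \<zeta>) (ereal (real n))"
proof -
  have 0: "0 \<le> min (phi u n \<zeta>) (ereal (real n))" using phi_nonneg[OF assms] by simp
  have 1: "min (phi u n \<zeta>) (ereal (real n)) \<le> ereal (real n)" by simp
  show e: "ereal (gg u n \<zeta>) = min (phi u n \<zeta>) (ereal (real n))"
    unfolding gg_def by (rule ereal_real_mid[OF 0 1])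
  show "0 \<le> gg u n \<zeta>" using 0 e by (metis ereal_less_eq(5))
  show "gg u n \<zeta> \<le> real n" using 1 e by (metis ereal_less_eq(3))
qed

lemma lam_bdd: assumes "\<forall>\<nu> \<zeta>. 0 \<le> u \<nu> \<zeta>"
  shows "bdd_below (range (\<lambda>\<zeta>. gg u n \<zeta> + real n * dist \<xi> \<zeta>))"
  using gg_props(1)[OF assms] by (intro bdd_belowI[of _ 0]) auto

lemma lam_nonneg: assumes "\<forall>\<nu> \<zeta>. 0 \<le> u \<nu> \<zeta>" shows "0 \<le> lam u n \<xi>"
  unfolding lam_def using gg_props(1)[OF assms] by (intro cINF_greatest) auto

lemma lam_le_gg: assumes "\<forall>\<nu> \<zeta>. 0 \<le> u \<nu> \<zeta>" shows "lam u n \<xi> \<le> gg u n \<xi>"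
  unfolding lam_def using cINF_lower[OF lam_bdd[OF assms], of \<xi> n \<xi>] by simp

lemma lam_le_phi: assumes "\<forall>\<nu> \<zeta>. 0 \<le> u \<nu> \<zeta>" shows "ereal (lam u n \<xi>) \<le> phi u n \<xi>"
proof -
  have "ereal (lam u n \<xi>) \<le> ereal (gg u n \<xi>)" using lam_le_gg[OF assms] by simp
  also have "\<dots> \<le> phi u n \<xi>" using gg_props(3)[OF assms] by simp
  finally show ?thesis .
qed

lemma lam_le_n: assumes "\<forall>\<nu> \<zeta>. 0 \<le> u \<nu> \<zeta>" shows "lam u n \<xi> \<le> real n"
  using lam_le_gg[OF assms] gg_props(2)[OF assms] by (meson order_trans)

lemma lam_lip: assumes "\<forall>\<nu> \<zeta>. 0 \<le> u \<nu> \<zeta>"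
  shows "lam u n \<xi> \<le> lam u n \<xi>' + real n * dist \<xi> \<xi>'"
proof -
  have "lam u n \<xi> - real n * dist \<xi> \<xi>' \<le> lam u n \<xi>'"
    unfolding lam_def[of u n \<xi>']
  proof (rule cINF_greatest)
    fix \<zeta>
    have "lam u n \<xi> \<le> gg u n \<zeta> + real n * dist \<xi> \<zeta>"
      unfolding lam_def by (rule cINF_lower[OF lam_bdd[OF assms]]) simp
    also have "\<dots> \<le> gg u n \<zeta> + real n * (dist \<xi> \<xi>' + dist \<xi>' \<zeta>)"
      by (intro add_left_mono mult_left_mono dist_triangle) auto
    finally show "lam u n \<xi> - real n * dist \<xi> \<xi>' \<le> gg u n \<zeta> + real n * dist \<xi>' \<zeta>"
      by (simp add: algebra_simps)
  qed simp
  then show ?thesis by simp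
qed

lemma lam_cont: assumes "\<forall>\<nu> \<zeta>. 0 \<le> u \<nu> \<zeta>" shows "continuous_on UNIV (lam u n)"
proof (rule lipschitz_on_continuous_on)
  show "(real n)-lipschitz_on UNIV (lam u n)"
  proof (rule lipschitz_onI)
    fix x y
    show "dist (lam u n x) (lam u n y) \<le> real n * dist x y"
      using lam_lip[OF assms, of n x y] lam_lip[OF assms, of n y x]
      by (simp add: dist_real_def dist_commute abs_le_iff)
  qed simp
qed

lemma phi_mono: assumes "m \<le> n" shows "phi u m \<xi> \<le> phi u n \<xi>"
  unfolding phi_def
proof (intro INF_greatest)
  fix \<nu> \<zeta> assume "\<nu> \<in> {n..}" "\<zeta> \<in> {\<zeta>. dist \<zeta> \<xi> < 1 / real (Suc n)}"
  moreover have "1 / real (Suc n) \<le> 1 / real (Suc m)" using assms by (simp add: frac_le)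
  ultimately show "(INF \<nu>\<in>{m..}. INF \<zeta>\<in>{\<zeta>. dist \<zeta> \<xi> < 1 / real (Suc m)}. u \<nu> \<zeta>) \<le> u \<nu> \<zeta>"
    using assms by (intro INF_lower2[of \<nu>]) (auto intro!: INF_lower)
qed

lemma lam_mono: assumes "\<forall>\<nu> \<zeta>. 0 \<le> u \<nu> \<zeta>" and "m \<le> n" shows "lam u m \<xi> \<le> lam u n \<xi>"
  unfolding lam_def[of u n]
proof (rule cINF_greatest)
  fix \<zeta>
  have "lam u m \<xi> \<le> gg u m \<zeta> + real m * dist \<xi> \<zeta>"
    unfolding lam_def by (rule cINF_lower[OF lam_bdd[OF assms(1)]]) simp
  also have "\<dots> \<le> gg u n \<zeta> + real n * dist \<xi> \<zeta>"
  proof (rule add_mono)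
    have "ereal (gg u m \<zeta>) \<le> ereal (gg u n \<zeta>)"
      unfolding gg_props(3)[OF assms(1)] using phi_mono[OF assms(2), of u \<zeta>] assms(2)
      by (intro min.mono) auto
    then show "gg u m \<zeta> \<le> gg u n \<zeta>" by simp
    show "real m * dist \<xi> \<zeta> \<le> real n * dist \<xi> \<zeta>" using assms(2) by (simp add: mult_right_mono)
  qed
  finally show "lam u m \<xi> \<le> gg u n \<zeta> + real n * dist \<xi> \<zeta>" .
qed simp

lemma K1:
  assumes nn: "\<forall>\<nu> \<zeta>. 0 \<le> u \<nu> \<zeta>" and c: "ereal c < phi u m \<xi>"
  shows "\<exists>n. c \<le> lam u n \<xi>"
proof -
  define R where "R = 1 / (2 * real (Suc m))"
  define n where "n = (2 * Suc m) * (nat \<lceil>\<bar>c\<bar>\<rceil> + 1)"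
  have R_pos: "0 < R" unfolding R_def by simp
  have nR: "real n * R = real (nat \<lceil>\<bar>c\<bar>\<rceil> + 1)" unfolding n_def R_def
    by (simp only: of_nat_mult) (simp add: field_simps)
  have nRc: "c \<le> real n * R" unfolding nR by linarith
  have n_ge: "2 * Suc m \<le> n" unfolding n_def by simp
  have R_le1: "R \<le> 1" unfolding R_def by simp
  have nc: "c \<le> real n"
  proof -
    have "real n * R \<le> real n * 1" using R_le1 by (intro mult_left_mono) auto
    then show ?thesis using nRc by simp
  qed
  have sn: "1 / real (Suc n) \<le> R"
    unfolding R_def using n_ge by (intro divide_left_mono) auto
  have "c \<le> lam u n \<xi>"
    unfolding lam_def
  proof (rule cINF_greatest)
    fix \<zeta>
    show "c \<le> gg u n \<zeta> + real n * dist \<xi> \<zeta>"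
    proof (cases "dist \<xi> \<zeta> < R")
      case False
      have "c \<le> real n * dist \<xi> \<zeta>"
        using nRc False by (meson mult_left_mono not_less of_nat_0_le_iff order_trans)
      then show ?thesis using gg_props(1)[OF nn, of n \<zeta>] by linarith
    next
      case True
      have "phi u m \<xi> \<le> phi u n \<zeta>"
        unfolding phi_def[of u n]
      proof (intro INF_greatest)
        fix \<nu> \<zeta>' assume \<nu>: "\<nu> \<in> {n..}" and z: "\<zeta>' \<in> {\<zeta>'. dist \<zeta>' \<zeta> < 1 / real (Suc n)}"
        have "dist \<zeta>' \<xi> \<le> dist \<zeta>' \<zeta> + dist \<zeta> \<xi>" by (rule dist_triangle)
        also have "\<dots> < R + R" using z sn True by (simp add: dist_commute)
        also have "R + R = 1 / real (Suc m)" unfolding R_def by (simp add: field_simps)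
        finally have "dist \<zeta>' \<xi> < 1 / real (Suc m)" .
        moreover have "m \<le> \<nu>" using \<nu> n_ge by simp
        ultimately show "phi u m \<xi> \<le> u \<nu> \<zeta>'"
          unfolding phi_def by (intro INF_lower2[of \<nu>]) (auto intro!: INF_lower)
      qed
      then have "ereal c \<le> min (phi u n \<zeta>) (ereal (real n))" using c nc by auto
      then have "ereal c \<le> ereal (gg u n \<zeta>)" using gg_props(3)[OF nn] by simp
      moreover have "0 \<le> real n * dist \<xi> \<zeta>" by simp
      ultimately show ?thesis by (simp del: of_nat_0_le_iff zero_le_dist zero_le_mult_iff)
    qed
  qed simp
  then show ?thesis by blast
qed

lemma psi_le_SUP:
  assumes nn: "\<forall>\<nu> \<zeta>. 0 \<le> u \<nu> \<zeta>"
  shows "e2ennreal (psi u \<xi>) \<le> (SUP n. ennreal (lam u n \<xi>))"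
proof (rule dense_le)
  fix t assume t: "t < e2ennreal (psi u \<xi>)"
  then have "t < top" using top.not_eq_extremum by fastforce
  then obtain c where c0: "0 \<le> c" and tc: "t = ennreal c" by (cases t rule: ennreal_cases) auto
  have "ereal c < psi u \<xi>"
  proof (cases "psi u \<xi>")
    case (real r) then show ?thesis using t tc c0 by (simp add: ennreal_less_iff)
  next
    case PInf then show ?thesis by simp
  next
    case MInf then show ?thesis using t by (simp add: e2ennreal_neg)
  qed
  then obtain m where "ereal c < phi u m \<xi>" unfolding psi_def by (auto simp: less_SUP_iff)
  then obtain n where "c \<le> lam u n \<xi>" using K1[OF nn] by blast
  then have "t \<le> ennreal (lam u n \<xi>)" unfolding tc by (simp add: ennreal_leI)
  also have "\<dots> \<le> (SUP n. ennreal (lam u n \<xi>))" by (rule SUP_upper) simp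
  finally show "t \<le> (SUP n. ennreal (lam u n \<xi>))" .
qed

lemma lam_int_eq:
  assumes nn: "\<forall>\<nu> \<zeta>. 0 \<le> u \<nu> \<zeta>" and M: "prob_space M" and Ms: "sets M = sets borel"
  shows "(\<integral>\<^sup>+ \<xi>. ennreal (lam u n \<xi>) \<partial>M) = ennreal (integral\<^sup>L M (lam u n))"
proof -
  interpret prob_space M by (rule M)
  have mb: "lam u n \<in> borel_measurable borel"
    by (rule borel_measurable_continuous_onI[OF lam_cont[OF nn]])
  then have m: "lam u n \<in> borel_measurable M"
    by (simp add: measurable_cong_sets[OF Ms refl])
  have "integrable M (lam u n)"
    by (rule integrable_const_bound[where B="real n"])
       (use m lam_nonneg[OF nn] lam_le_n[OF nn] in auto)
  then show ?thesis
    by (rule nn_integral_eq_integral) (use lam_nonneg[OF nn] in auto)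
qed

lemma core:
  fixes P :: "'c::metric_space measure" and Ps :: "nat \<Rightarrow> 'c measure"
  assumes P_prob: "prob_space P" and P_sets: "sets P = sets borel"
    and Ps_prob: "\<And>\<nu>. prob_space (Ps \<nu>)" and Ps_sets: "\<And>\<nu>. sets (Ps \<nu>) = sets borel"
    and weak: "weak_conv Ps P" and nn: "\<forall>\<nu> \<zeta>. 0 \<le> u \<nu> \<zeta>"
    and t: "t < (\<integral>\<^sup>+ \<xi>. e2ennreal (psi u \<xi>) \<partial>P)"
  shows "eventually (\<lambda>\<nu>. t < (\<integral>\<^sup>+ \<zeta>. e2ennreal (u \<nu> \<zeta>) \<partial>Ps \<nu>)) sequentially"
proof -
  have mb: "\<And>n. lam u n \<in> borel_measurable borel"
    by (rule borel_measurable_continuous_onI[OF lam_cont[OF nn]])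
  have mP: "\<And>n. (\<lambda>\<xi>. ennreal (lam u n \<xi>)) \<in> borel_measurable P"
    by (rule measurable_compose[OF _ measurable_ennreal]) (simp add: measurable_cong_sets[OF P_sets refl] mb)
  have inc: "incseq (\<lambda>n \<xi>. ennreal (lam u n \<xi>))"
    unfolding incseq_def le_fun_def using lam_mono[OF nn] by (simp add: ennreal_leI)
  have "t < (\<integral>\<^sup>+ \<xi>. (SUP n. ennreal (lam u n \<xi>)) \<partial>P)"
    using t psi_le_SUP[OF nn] by (meson less_le_trans nn_integral_mono)
  also have "\<dots> = (SUP n. \<integral>\<^sup>+ \<xi>. ennreal (lam u n \<xi>) \<partial>P)"
    by (rule nn_integral_monotone_convergence_SUP[OF inc mP])
  finally obtain n where tn: "t < (\<integral>\<^sup>+ \<xi>. ennreal (lam u n \<xi>) \<partial>P)"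
    by (auto simp: less_SUP_iff)
  then have "t < top" using top.not_eq_extremum by fastforce
  then obtain c where c0: "0 \<le> c" and tc: "t = ennreal c" by (cases t rule: ennreal_cases) auto
  have "c < integral\<^sup>L P (lam u n)"
    using tn unfolding lam_int_eq[OF nn P_prob P_sets] tc using c0 by (simp add: ennreal_less_iff)
  moreover have "(\<lambda>\<nu>. integral\<^sup>L (Ps \<nu>) (lam u n)) \<longlonglongrightarrow> integral\<^sup>L P (lam u n)"
  proof -
    have "bounded (range (lam u n))"
      unfolding bounded_iff using lam_nonneg[OF nn] lam_le_n[OF nn]
      by (intro exI[of _ "real n"]) auto
    then show ?thesis using weak lam_cont[OF nn] unfolding weak_conv_def by blast
  qed
  ultimately have ev1: "eventually (\<lambda>\<nu>. c < integral\<^sup>L (Ps \<nu>) (lam u n)) sequentially"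
    by (rule order_tendstoD(1)[rotated])
  have ev2: "eventually (\<lambda>\<nu>. n \<le> \<nu>) sequentially" by (rule eventually_ge_at_top)
  show ?thesis
    using ev1 ev2
  proof eventually_elim
    case (elim \<nu>)
    have "t < ennreal (integral\<^sup>L (Ps \<nu>) (lam u n))"
      unfolding tc using elim c0 by (simp add: ennreal_less_iff)
    also have "\<dots> = (\<integral>\<^sup>+ \<xi>. ennreal (lam u n \<xi>) \<partial>Ps \<nu>)"
      by (rule lam_int_eq[OF nn Ps_prob Ps_sets, symmetric])
    also have "\<dots> \<le> (\<integral>\<^sup>+ \<zeta>. e2ennreal (u \<nu> \<zeta>) \<partial>Ps \<nu>)"
    proof (rule nn_integral_mono)
      fix \<zeta>
      have "ereal (lam u n \<zeta>) \<le> u \<nu> \<zeta>"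
        using lam_le_phi[OF nn, of n \<zeta>] phi_le_u[OF elim(2), of u \<zeta>] by simp
      then show "ennreal (lam u n \<zeta>) \<le> e2ennreal (u \<nu> \<zeta>)"
        using e2ennreal_mono by fastforce
    qed
    finally show ?case .
  qed
qed


lemma pw_lo:
  fixes x :: ereal and K :: real assumes K: "0 \<le> K"
  shows "e2ennreal (max x (- ereal K) + ereal K) + e2ennreal (min (max 0 (- x)) (ereal K))
           = e2ennreal (max 0 x) + ennreal K"
    "e2ennreal (max 0 (- x)) \<le> e2ennreal (min (max 0 (- x)) (ereal K))
           + e2ennreal (max 0 (- (if x \<le> - ereal K then x else 0)))"
    "e2ennreal (min (max 0 (- x)) (ereal K)) \<le> e2ennreal (max 0 (- x))"
    "e2ennreal (min (max 0 (- x)) (ereal K)) \<le> ennreal K"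
proof -
  show "e2ennreal (min (max 0 (- x)) (ereal K)) \<le> e2ennreal (max 0 (- x))"
    by (intro e2ennreal_mono) simp
  show "e2ennreal (min (max 0 (- x)) (ereal K)) \<le> ennreal K"
    by (metis e2ennreal_ereal e2ennreal_mono min.cobounded2)
  show "e2ennreal (max x (- ereal K) + ereal K) + e2ennreal (min (max 0 (- x)) (ereal K))
           = e2ennreal (max 0 x) + ennreal K"
  proof (cases x)
    case (real r)
    then show ?thesis using K
      by (cases "r \<le> -K"; cases "r \<le> 0")
         (auto simp: max_def min_def ennreal_plus[symmetric] simp del: ennreal_plus)
  qed (use K in auto)
  show "e2ennreal (max 0 (- x)) \<le> e2ennreal (min (max 0 (- x)) (ereal K))
           + e2ennreal (max 0 (- (if x \<le> - ereal K then x else 0)))"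
  proof (cases x)
    case (real r)
    then show ?thesis using K
      by (cases "r \<le> -K"; cases "r \<le> 0")
         (auto simp: max_def min_def ennreal_plus[symmetric] simp del: ennreal_plus intro!: ennreal_leI)
  qed (use K in auto)
qed

lemma pw_hi:
  fixes x :: ereal and K :: real assumes K: "0 \<le> K"
  shows "e2ennreal (min (max 0 x) (ereal K)) + e2ennreal (ereal K - min (max 0 x) (ereal K)) = ennreal K"
    "e2ennreal (ereal K - min x (ereal K)) = e2ennreal (ereal K - min (max 0 x) (ereal K)) + e2ennreal (max 0 (- x))"
    "e2ennreal (max 0 x) \<le> e2ennreal (min (max 0 x) (ereal K)) + e2ennreal (max 0 (if ereal K \<le> x then x else 0))"
    "e2ennreal (min (max 0 x) (ereal K)) \<le> e2ennreal (max 0 x)"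
proof -
  show "e2ennreal (min (max 0 x) (ereal K)) \<le> e2ennreal (max 0 x)"
    by (intro e2ennreal_mono) simp
  show "e2ennreal (min (max 0 x) (ereal K)) + e2ennreal (ereal K - min (max 0 x) (ereal K)) = ennreal K"
  proof (cases x)
    case (real r)
    then show ?thesis using K
      by (cases "r \<le> K"; cases "r \<le> 0")
         (auto simp: max_def min_def ennreal_plus[symmetric] simp del: ennreal_plus)
  qed (use K in auto)
  show "e2ennreal (ereal K - min x (ereal K)) = e2ennreal (ereal K - min (max 0 x) (ereal K)) + e2ennreal (max 0 (- x))"
  proof (cases x)
    case (real r)
    then show ?thesis using K
      by (cases "r \<le> K"; cases "r \<le> 0")
         (auto simp: max_def min_def ennreal_plus[symmetric] simp del: ennreal_plus)
  qed (use K in auto)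
  show "e2ennreal (max 0 x) \<le> e2ennreal (min (max 0 x) (ereal K)) + e2ennreal (max 0 (if ereal K \<le> x then x else 0))"
  proof (cases x)
    case (real r)
    then show ?thesis using K
      by (cases "r \<le> K"; cases "r \<le> 0")
         (auto simp: max_def min_def ennreal_plus[symmetric] simp del: ennreal_plus intro!: ennreal_leI)
  qed (use K in auto)
qed

lemma nn_int_const_prob: "prob_space M \<Longrightarrow> (\<integral>\<^sup>+ x. ennreal K \<partial>M) = ennreal K"
  by (simp add: prob_space.emeasure_space_1)

lemma eexp_alt: "eexp M g = (if (\<integral>\<^sup>+ x. e2ennreal (max 0 (g x)) \<partial>M) = \<infinity> then \<infinity>
   else enn2ereal (\<integral>\<^sup>+ x. e2ennreal (max 0 (g x)) \<partial>M) - enn2ereal (\<integral>\<^sup>+ x. e2ennreal (max 0 (- g x)) \<partial>M))"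
  unfolding eexp_def Let_def by simp

lemma fin_real: "(x::ennreal) < \<infinity> \<Longrightarrow> \<exists>r\<ge>0. x = ennreal r"
  by (cases x rule: ennreal_cases) auto

lemma LI:
  assumes M: "prob_space M" and h: "h \<in> borel_measurable M" and K: "0 \<le> K"
  shows "enn2ereal (\<integral>\<^sup>+ \<xi>. e2ennreal (max (h \<xi>) (- ereal K) + ereal K) \<partial>M) - ereal K
           + eexp M (\<lambda>\<xi>. if h \<xi> \<le> - ereal K then h \<xi> else 0) \<le> eexp M h"
proof -
  define U where "U = (\<integral>\<^sup>+ \<xi>. e2ennreal (max (h \<xi>) (- ereal K) + ereal K) \<partial>M)"
  define C where "C = (\<integral>\<^sup>+ \<xi>. e2ennreal (min (max 0 (- h \<xi>)) (ereal K)) \<partial>M)"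
  define D where "D = (\<integral>\<^sup>+ \<xi>. e2ennreal (max 0 (- (if h \<xi> \<le> - ereal K then h \<xi> else 0))) \<partial>M)"
  define A where "A = (\<integral>\<^sup>+ \<xi>. e2ennreal (max 0 (h \<xi>)) \<partial>M)"
  define B where "B = (\<integral>\<^sup>+ \<xi>. e2ennreal (max 0 (- h \<xi>)) \<partial>M)"
  have trunc: "eexp M (\<lambda>\<xi>. if h \<xi> \<le> - ereal K then h \<xi> else 0) = - enn2ereal D"
  proof -
    have "\<And>\<xi>. max 0 (if h \<xi> \<le> - ereal K then h \<xi> else 0) = 0"
    proof -
      fix \<xi>
      show "max 0 (if h \<xi> \<le> - ereal K then h \<xi> else 0) = 0"
        using K by (cases "h \<xi>") (auto simp: max_def)
    qed
    then show ?thesis unfolding eexp_alt D_def by (simp add: zero_ennreal.rep_eq)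
  qed
  have UC: "U + C = A + ennreal K"
  proof -
    have "U + C = (\<integral>\<^sup>+ \<xi>. e2ennreal (max (h \<xi>) (- ereal K) + ereal K) + e2ennreal (min (max 0 (- h \<xi>)) (ereal K)) \<partial>M)"
      unfolding U_def C_def by (rule nn_integral_add[symmetric]) (use h in measurable)
    also have "\<dots> = (\<integral>\<^sup>+ \<xi>. e2ennreal (max 0 (h \<xi>)) + ennreal K \<partial>M)"
      using pw_lo(1)[OF K] by simp
    also have "\<dots> = A + ennreal K"
      unfolding A_def by (subst nn_integral_add) (use h nn_int_const_prob[OF M] in auto)
    finally show ?thesis .
  qed
  have BCD: "B \<le> C + D"
  proof -
    have "B \<le> (\<integral>\<^sup>+ \<xi>. e2ennreal (min (max 0 (- h \<xi>)) (ereal K)) + e2ennreal (max 0 (- (if h \<xi> \<le> - ereal K then h \<xi> else 0))) \<partial>M)"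
      unfolding B_def by (intro nn_integral_mono pw_lo(2)[OF K])
    also have "\<dots> = C + D"
      unfolding C_def D_def by (rule nn_integral_add) (use h in measurable)
    finally show ?thesis .
  qed
  have CK: "C \<le> ennreal K"
    unfolding C_def using nn_integral_mono[OF pw_lo(4)[OF K]] nn_int_const_prob[OF M] by metis
  show ?thesis
  proof (cases "A = \<infinity>")
    case True then show ?thesis unfolding eexp_alt A_def by simp
  next
    case Af: False
    have Cf: "C < \<infinity>" using CK by (simp add: le_less_trans)
    have "U \<le> U + C" by (rule add_increasing2) auto
    moreover have "A + ennreal K < \<infinity>" using Af by (simp add: top.not_eq_extremum)
    ultimately have Uf: "U < \<infinity>" unfolding UC by (rule le_less_trans)
    show ?thesis
    proof (cases "D = \<infinity>")
      case True
      obtain u where u: "u \<ge> 0" "U = ennreal u" using fin_real[OF Uf] by blast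
      show ?thesis using True u unfolding trunc U_def[symmetric] by simp
    next
      case Df: False
      have "C + D < \<infinity>" using Cf Df by (simp add: top.not_eq_extremum)
      with BCD have Bf: "B < \<infinity>" by (rule le_less_trans)
      obtain u where u: "u \<ge> 0" "U = ennreal u" using fin_real[OF Uf] by blast
      obtain c where c: "c \<ge> 0" "C = ennreal c" using fin_real[OF Cf] by blast
      have "A < \<infinity>" using Af by (simp add: top.not_eq_extremum)
      then obtain a where a: "a \<ge> 0" "A = ennreal a" using fin_real by blast
      obtain b where b: "b \<ge> 0" "B = ennreal b" using fin_real[OF Bf] by blast
      have "D < \<infinity>" using Df by (simp add: top.not_eq_extremum)
      then obtain d where d: "d \<ge> 0" "D = ennreal d" using fin_real by blast
      have e1: "u + c = a + K" using UC u c a K by (simp add: ennreal_plus[symmetric] del: ennreal_plus)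
      have e2: "b \<le> c + d" using BCD b c d by (simp add: ennreal_plus[symmetric] del: ennreal_plus)
      have "eexp M h = ereal a - ereal b" unfolding eexp_alt A_def[symmetric] B_def[symmetric] using a b by simp
      moreover have "enn2ereal U - ereal K + eexp M (\<lambda>\<xi>. if h \<xi> \<le> - ereal K then h \<xi> else 0) = ereal u - ereal K - ereal d"
        unfolding trunc using u d by simp
      ultimately show ?thesis unfolding U_def[symmetric] using e1 e2 by simp
    qed
  qed
qed

lemma LF:
  assumes M: "prob_space M" and h: "h \<in> borel_measurable M" and K: "0 \<le> K"
  shows "eexp M h \<le> enn2ereal (\<integral>\<^sup>+ \<xi>. e2ennreal (max (h \<xi>) (- ereal K) + ereal K) \<partial>M) - ereal K"
proof -
  define U where "U = (\<integral>\<^sup>+ \<xi>. e2ennreal (max (h \<xi>) (- ereal K) + ereal K) \<partial>M)"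
  define C where "C = (\<integral>\<^sup>+ \<xi>. e2ennreal (min (max 0 (- h \<xi>)) (ereal K)) \<partial>M)"
  define A where "A = (\<integral>\<^sup>+ \<xi>. e2ennreal (max 0 (h \<xi>)) \<partial>M)"
  define B where "B = (\<integral>\<^sup>+ \<xi>. e2ennreal (max 0 (- h \<xi>)) \<partial>M)"
  have UC: "U + C = A + ennreal K"
  proof -
    have "U + C = (\<integral>\<^sup>+ \<xi>. e2ennreal (max (h \<xi>) (- ereal K) + ereal K) + e2ennreal (min (max 0 (- h \<xi>)) (ereal K)) \<partial>M)"
      unfolding U_def C_def by (rule nn_integral_add[symmetric]) (use h in measurable)
    also have "\<dots> = (\<integral>\<^sup>+ \<xi>. e2ennreal (max 0 (h \<xi>)) + ennreal K \<partial>M)"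
      using pw_lo(1)[OF K] by simp
    also have "\<dots> = A + ennreal K"
      unfolding A_def by (subst nn_integral_add) (use h nn_int_const_prob[OF M] in auto)
    finally show ?thesis .
  qed
  have CB: "C \<le> B" unfolding C_def B_def by (intro nn_integral_mono pw_lo(3)[OF K])
  have CK: "C \<le> ennreal K"
    unfolding C_def using nn_integral_mono[OF pw_lo(4)[OF K]] nn_int_const_prob[OF M] by metis
  have Cf: "C < \<infinity>" using CK by (simp add: le_less_trans)
  then obtain c where c: "c \<ge> 0" "C = ennreal c" using fin_real by blast
  show ?thesis
  proof (cases "A = \<infinity>")
    case True
    then have "U + C = \<infinity>" using UC by simp
    then have "U = \<infinity>" using c by simp
    then show ?thesis unfolding U_def[symmetric] by simp
  next
    case Af: False
    have "U \<le> U + C" by (rule add_increasing2) auto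
    moreover have "A + ennreal K < \<infinity>" using Af by (simp add: top.not_eq_extremum)
    ultimately have Uf: "U < \<infinity>" unfolding UC by (rule le_less_trans)
    then obtain u where u: "u \<ge> 0" "U = ennreal u" using fin_real by blast
    have "A < \<infinity>" using Af by (simp add: top.not_eq_extremum)
    then obtain a where a: "a \<ge> 0" "A = ennreal a" using fin_real by blast
    show ?thesis
    proof (cases "B = \<infinity>")
      case True
      then show ?thesis unfolding eexp_alt A_def[symmetric] B_def[symmetric] using Af a by simp
    next
      case Bf: False
      have "B < \<infinity>" using Bf by (simp add: top.not_eq_extremum)
      then obtain b where b: "b \<ge> 0" "B = ennreal b" using fin_real by blast
      have e1: "u + c = a + K" using UC u c a K by (simp add: ennreal_plus[symmetric] del: ennreal_plus)
      have e2: "c \<le> b" using CB b c by simp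
      have "eexp M h = ereal a - ereal b" unfolding eexp_alt A_def[symmetric] B_def[symmetric] using a b by simp
      then show ?thesis unfolding U_def[symmetric] using e1 e2 u by simp
    qed
  qed
qed

lemma UI:
  assumes M: "prob_space M" and h: "h \<in> borel_measurable M" and K: "0 \<le> K"
  shows "eexp M h \<le> ereal K - enn2ereal (\<integral>\<^sup>+ \<xi>. e2ennreal (ereal K - min (h \<xi>) (ereal K)) \<partial>M)
           + eexp M (\<lambda>\<xi>. if ereal K \<le> h \<xi> then h \<xi> else 0)"
proof -
  define W where "W = (\<integral>\<^sup>+ \<xi>. e2ennreal (ereal K - min (h \<xi>) (ereal K)) \<partial>M)"
  define E where "E = (\<integral>\<^sup>+ \<xi>. e2ennreal (min (max 0 (h \<xi>)) (ereal K)) \<partial>M)"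
  define Q where "Q = (\<integral>\<^sup>+ \<xi>. e2ennreal (ereal K - min (max 0 (h \<xi>)) (ereal K)) \<partial>M)"
  define PK where "PK = (\<integral>\<^sup>+ \<xi>. e2ennreal (max 0 (if ereal K \<le> h \<xi> then h \<xi> else 0)) \<partial>M)"
  define A where "A = (\<integral>\<^sup>+ \<xi>. e2ennreal (max 0 (h \<xi>)) \<partial>M)"
  define B where "B = (\<integral>\<^sup>+ \<xi>. e2ennreal (max 0 (- h \<xi>)) \<partial>M)"
  have trunc: "eexp M (\<lambda>\<xi>. if ereal K \<le> h \<xi> then h \<xi> else 0) = (if PK = \<infinity> then \<infinity> else enn2ereal PK)"
  proof -
    have "\<And>\<xi>. max 0 (- (if ereal K \<le> h \<xi> then h \<xi> else 0)) = 0"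
    proof -
      fix \<xi>
      show "max 0 (- (if ereal K \<le> h \<xi> then h \<xi> else 0)) = 0"
        using K by (cases "h \<xi>") (auto simp: max_def)
    qed
    then show ?thesis unfolding eexp_alt PK_def by (simp add: zero_ennreal.rep_eq)
  qed
  have EQ: "E + Q = ennreal K"
  proof -
    have "E + Q = (\<integral>\<^sup>+ \<xi>. e2ennreal (min (max 0 (h \<xi>)) (ereal K)) + e2ennreal (ereal K - min (max 0 (h \<xi>)) (ereal K)) \<partial>M)"
      unfolding E_def Q_def by (rule nn_integral_add[symmetric]) (use h in measurable)
    also have "\<dots> = (\<integral>\<^sup>+ \<xi>. ennreal K \<partial>M)"
      using pw_hi(1)[OF K] by simp
    finally show ?thesis using nn_int_const_prob[OF M] by simp
  qed
  have WQB: "W = Q + B"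
  proof -
    have "W = (\<integral>\<^sup>+ \<xi>. e2ennreal (ereal K - min (max 0 (h \<xi>)) (ereal K)) + e2ennreal (max 0 (- h \<xi>)) \<partial>M)"
      unfolding W_def by (intro nn_integral_cong pw_hi(2)[OF K])
    also have "\<dots> = Q + B"
      unfolding Q_def B_def by (rule nn_integral_add) (use h in measurable)
    finally show ?thesis .
  qed
  have AEP: "A \<le> E + PK"
  proof -
    have "A \<le> (\<integral>\<^sup>+ \<xi>. e2ennreal (min (max 0 (h \<xi>)) (ereal K)) + e2ennreal (max 0 (if ereal K \<le> h \<xi> then h \<xi> else 0)) \<partial>M)"
      unfolding A_def by (intro nn_integral_mono pw_hi(3)[OF K])
    also have "\<dots> = E + PK"
      unfolding E_def PK_def by (rule nn_integral_add) (use h in measurable)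
    finally show ?thesis .
  qed
  show ?thesis
  proof (cases "PK = \<infinity>")
    case True then show ?thesis unfolding trunc by simp
  next
    case PKf: False
    have "PK < \<infinity>" using PKf by (simp add: top.not_eq_extremum)
    then obtain pk where pk: "pk \<ge> 0" "PK = ennreal pk" using fin_real by blast
    have "E \<le> E + Q" by (rule add_increasing2) auto
    then have "E < \<infinity>" unfolding EQ by (simp add: le_less_trans)
    then obtain e where e: "e \<ge> 0" "E = ennreal e" using fin_real by blast
    have "Q \<le> E + Q" by (rule add_increasing) auto
    then have "Q < \<infinity>" unfolding EQ by (simp add: le_less_trans)
    then obtain q where q: "q \<ge> 0" "Q = ennreal q" using fin_real by blast
    have "E + PK < \<infinity>" using e pk by simp
    then have "A < \<infinity>" using AEP by (rule le_less_trans[rotated])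
    then obtain a where a: "a \<ge> 0" "A = ennreal a" using fin_real by blast
    show ?thesis
    proof (cases "B = \<infinity>")
      case True
      then show ?thesis unfolding eexp_alt A_def[symmetric] B_def[symmetric] using a by simp
    next
      case Bf: False
      have "B < \<infinity>" using Bf by (simp add: top.not_eq_extremum)
      then obtain b where b: "b \<ge> 0" "B = ennreal b" using fin_real by blast
      have e1: "e + q = K" using EQ e q K by (simp add: ennreal_plus[symmetric] del: ennreal_plus)
      have e2: "a \<le> e + pk" using AEP a e pk by (simp add: ennreal_plus[symmetric] del: ennreal_plus)
      have W0: "W = ennreal (q + b)" using WQB q b by simp
      have W: "enn2ereal W = ereal (q + b)" unfolding W0 using q b by (intro enn2ereal_ennreal) simp
      have "eexp M h = ereal a - ereal b" unfolding eexp_alt A_def[symmetric] B_def[symmetric] using a b by simp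
      then show ?thesis unfolding W_def[symmetric] trunc W using e1 e2 pk q b PKf by simp
    qed
  qed
qed

lemma UF:
  assumes M: "prob_space M" and h: "h \<in> borel_measurable M" and K: "0 \<le> K"
  shows "ereal K - enn2ereal (\<integral>\<^sup>+ \<xi>. e2ennreal (ereal K - min (h \<xi>) (ereal K)) \<partial>M) \<le> eexp M h"
proof -
  define W where "W = (\<integral>\<^sup>+ \<xi>. e2ennreal (ereal K - min (h \<xi>) (ereal K)) \<partial>M)"
  define E where "E = (\<integral>\<^sup>+ \<xi>. e2ennreal (min (max 0 (h \<xi>)) (ereal K)) \<partial>M)"
  define Q where "Q = (\<integral>\<^sup>+ \<xi>. e2ennreal (ereal K - min (max 0 (h \<xi>)) (ereal K)) \<partial>M)"
  define A where "A = (\<integral>\<^sup>+ \<xi>. e2ennreal (max 0 (h \<xi>)) \<partial>M)"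
  define B where "B = (\<integral>\<^sup>+ \<xi>. e2ennreal (max 0 (- h \<xi>)) \<partial>M)"
  have EQ: "E + Q = ennreal K"
  proof -
    have "E + Q = (\<integral>\<^sup>+ \<xi>. e2ennreal (min (max 0 (h \<xi>)) (ereal K)) + e2ennreal (ereal K - min (max 0 (h \<xi>)) (ereal K)) \<partial>M)"
      unfolding E_def Q_def by (rule nn_integral_add[symmetric]) (use h in measurable)
    also have "\<dots> = (\<integral>\<^sup>+ \<xi>. ennreal K \<partial>M)"
      using pw_hi(1)[OF K] by simp
    finally show ?thesis using nn_int_const_prob[OF M] by simp
  qed
  have WQB: "W = Q + B"
  proof -
    have "W = (\<integral>\<^sup>+ \<xi>. e2ennreal (ereal K - min (max 0 (h \<xi>)) (ereal K)) + e2ennreal (max 0 (- h \<xi>)) \<partial>M)"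
      unfolding W_def by (intro nn_integral_cong pw_hi(2)[OF K])
    also have "\<dots> = Q + B"
      unfolding Q_def B_def by (rule nn_integral_add) (use h in measurable)
    finally show ?thesis .
  qed
  have EA: "E \<le> A" unfolding E_def A_def by (intro nn_integral_mono pw_hi(4)[OF K])
  show ?thesis
  proof (cases "A = \<infinity>")
    case True then show ?thesis unfolding eexp_alt A_def[symmetric] by simp
  next
    case Af: False
    have "A < \<infinity>" using Af by (simp add: top.not_eq_extremum)
    then obtain a where a: "a \<ge> 0" "A = ennreal a" using fin_real by blast
    have "E \<le> E + Q" by (rule add_increasing2) auto
    then have "E < \<infinity>" unfolding EQ by (simp add: le_less_trans)
    then obtain e where e: "e \<ge> 0" "E = ennreal e" using fin_real by blast
    have "Q \<le> E + Q" by (rule add_increasing) auto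
    then have "Q < \<infinity>" unfolding EQ by (simp add: le_less_trans)
    then obtain q where q: "q \<ge> 0" "Q = ennreal q" using fin_real by blast
    show ?thesis
    proof (cases "B = \<infinity>")
      case True
      then have "W = \<infinity>" using WQB by simp
      then show ?thesis unfolding W_def[symmetric] by simp
    next
      case Bf: False
      have "B < \<infinity>" using Bf by (simp add: top.not_eq_extremum)
      then obtain b where b: "b \<ge> 0" "B = ennreal b" using fin_real by blast
      have e1: "e + q = K" using EQ e q K by (simp add: ennreal_plus[symmetric] del: ennreal_plus)
      have e2: "e \<le> a" using EA a e by simp
      have W0: "W = ennreal (q + b)" using WQB q b by simp
      have W: "enn2ereal W = ereal (q + b)" unfolding W0 using q b by (intro enn2ereal_ennreal) simp
      have "eexp M h = ereal a - ereal b" unfolding eexp_alt A_def[symmetric] B_def[symmetric] using a b by simp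
      then show ?thesis unfolding W_def[symmetric] W using e1 e2 q b by simp
    qed
  qed
qed


lemma inv_lt: assumes "0 < \<delta>" "nat \<lceil>1/\<delta>\<rceil> \<le> m" shows "1 / real (Suc m) < \<delta>"
proof -
  have "1/\<delta> \<le> real m" using assms(2) by linarith
  then have "1/\<delta> < real (Suc m)" by simp
  then show ?thesis using assms(1) by (simp add: divide_less_eq mult.commute pos_divide_less_eq)
qed

lemma psi_nonneg: assumes "\<forall>\<nu> \<zeta>. 0 \<le> u \<nu> \<zeta>" shows "0 \<le> psi u \<xi>"
  unfolding psi_def using phi_nonneg[OF assms, of 0 \<xi>] by (meson SUP_upper2 UNIV_I)

lemma psi_lower:
  fixes xs :: "nat \<Rightarrow> 'x::metric_space" and fs :: "nat \<Rightarrow> 'c::metric_space \<Rightarrow> 'x \<Rightarrow> ereal"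
  assumes xs: "xs \<longlonglongrightarrow> x" and K: "0 \<le> K"
    and L: "f0 \<le> liminf3 (\<lambda>\<nu> y \<zeta>. fs \<nu> \<zeta> y) x \<xi>"
  shows "max f0 (- ereal K) + ereal K \<le> psi (\<lambda>\<nu> \<zeta>. max (fs \<nu> \<zeta> (xs \<nu>)) (- ereal K) + ereal K) \<xi>"
proof -
  define u where "u = (\<lambda>\<nu> \<zeta>. max (fs \<nu> \<zeta> (xs \<nu>)) (- ereal K) + ereal K)"
  have nn: "\<forall>\<nu> \<zeta>. 0 \<le> u \<nu> \<zeta>"
  proof (intro allI)
    fix \<nu> \<zeta> show "0 \<le> u \<nu> \<zeta>" unfolding u_def by (cases "fs \<nu> \<zeta> (xs \<nu>)") (auto simp: max_def)
  qed
  show ?thesis unfolding u_def[symmetric]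
  proof (rule dense_le)
    fix t assume t: "t < max f0 (- ereal K) + ereal K"
    show "t \<le> psi u \<xi>"
    proof (cases "t \<le> 0")
      case True then show ?thesis using psi_nonneg[OF nn] by (meson order_trans)
    next
      case False
      have "t \<noteq> \<infinity>" using t by auto
      moreover have "t \<noteq> -\<infinity>" using False by auto
      ultimately obtain tr where tr: "t = ereal tr" by (cases t) auto
      have tr0: "0 < tr" using False tr by simp
      have "ereal (tr - K) < f0"
      proof (cases f0)
        case (real r) then show ?thesis using t tr tr0 by (auto simp: max_def split: if_splits)
      next
        case PInf then show ?thesis by simp
      next
        case MInf then show ?thesis using t tr tr0 by (auto simp: max_def split: if_splits)
      qed
      then have "ereal (tr - K) < liminf3 (\<lambda>\<nu> y \<zeta>. fs \<nu> \<zeta> y) x \<xi>" using L by (rule less_le_trans)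
      then obtain \<delta> N where \<delta>: "0 < \<delta>" and
        cN: "ereal (tr - K) < (INF \<nu>\<in>{N..}. INF y\<in>{y. dist y x < \<delta>}. INF \<zeta>\<in>{\<zeta>. dist \<zeta> \<xi> < \<delta>}. fs \<nu> \<zeta> y)"
        unfolding liminf3_def by (auto simp: less_SUP_iff)
      obtain N' where N': "\<forall>n\<ge>N'. dist (xs n) x < \<delta>" using metric_LIMSEQ_D[OF xs \<delta>] by blast
      define m where "m = max (max N N') (nat \<lceil>1/\<delta>\<rceil>)"
      have m\<delta>: "1 / real (Suc m) < \<delta>" by (rule inv_lt[OF \<delta>]) (simp add: m_def)
      have "ereal tr \<le> phi u m \<xi>"
        unfolding phi_def
      proof (intro INF_greatest)
        fix \<nu> \<zeta> assume \<nu>: "\<nu> \<in> {m..}" and \<zeta>: "\<zeta> \<in> {\<zeta>. dist \<zeta> \<xi> < 1 / real (Suc m)}"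
        have "ereal (tr - K) < fs \<nu> \<zeta> (xs \<nu>)"
        proof -
          have "(INF \<nu>\<in>{N..}. INF y\<in>{y. dist y x < \<delta>}. INF \<zeta>\<in>{\<zeta>. dist \<zeta> \<xi> < \<delta>}. fs \<nu> \<zeta> y) \<le> fs \<nu> \<zeta> (xs \<nu>)"
            using \<nu> \<zeta> m\<delta> N' unfolding m_def
            by (intro INF_lower2[of \<nu>] INF_lower2[of "xs \<nu>"] INF_lower) auto
          then show ?thesis using cN by (rule less_le_trans[rotated])
        qed
        then show "ereal tr \<le> u \<nu> \<zeta>" unfolding u_def
          by (cases "fs \<nu> \<zeta> (xs \<nu>)") (auto simp: max_def)
      qed
      also have "\<dots> \<le> psi u \<xi>" unfolding psi_def by (rule SUP_upper) simp
      finally show ?thesis unfolding tr .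
    qed
  qed
qed

lemma psi_upper:
  fixes xs :: "nat \<Rightarrow> 'x::metric_space" and fs :: "nat \<Rightarrow> 'c::metric_space \<Rightarrow> 'x \<Rightarrow> ereal"
  assumes K: "0 \<le> K" and L: "limsup2 (\<lambda>\<nu> \<zeta>. fs \<nu> \<zeta> (xs \<nu>)) \<xi> \<le> f0"
  shows "ereal K - min f0 (ereal K) \<le> psi (\<lambda>\<nu> \<zeta>. ereal K - min (fs \<nu> \<zeta> (xs \<nu>)) (ereal K)) \<xi>"
proof -
  define u where "u = (\<lambda>\<nu> \<zeta>. ereal K - min (fs \<nu> \<zeta> (xs \<nu>)) (ereal K))"
  have nn: "\<forall>\<nu> \<zeta>. 0 \<le> u \<nu> \<zeta>"
  proof (intro allI)
    fix \<nu> \<zeta> show "0 \<le> u \<nu> \<zeta>" unfolding u_def by (cases "fs \<nu> \<zeta> (xs \<nu>)") (auto simp: min_def)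
  qed
  show ?thesis unfolding u_def[symmetric]
  proof (rule dense_le)
    fix t assume t: "t < ereal K - min f0 (ereal K)"
    show "t \<le> psi u \<xi>"
    proof (cases "t \<le> 0")
      case True then show ?thesis using psi_nonneg[OF nn] by (meson order_trans)
    next
      case False
      have "t \<noteq> \<infinity>" using t by auto
      moreover have "t \<noteq> -\<infinity>" using False by auto
      ultimately obtain tr where tr: "t = ereal tr" by (cases t) auto
      have tr0: "0 < tr" using False tr by simp
      have "f0 < ereal (K - tr)"
      proof (cases f0)
        case (real r) then show ?thesis using t tr tr0 by (auto simp: min_def split: if_splits)
      next
        case PInf then show ?thesis using t tr tr0 by (auto simp: min_def split: if_splits)
      next
        case MInf then show ?thesis by simp
      qed
      then have "limsup2 (\<lambda>\<nu> \<zeta>. fs \<nu> \<zeta> (xs \<nu>)) \<xi> < ereal (K - tr)" using L by (rule le_less_trans[rotated])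
      then obtain \<delta> N where \<delta>: "0 < \<delta>" and
        cN: "(SUP \<nu>\<in>{N..}. SUP \<zeta>\<in>{\<zeta>. dist \<zeta> \<xi> < \<delta>}. fs \<nu> \<zeta> (xs \<nu>)) < ereal (K - tr)"
        unfolding limsup2_def by (auto simp: INF_less_iff)
      define m where "m = max N (nat \<lceil>1/\<delta>\<rceil>)"
      have m\<delta>: "1 / real (Suc m) < \<delta>" by (rule inv_lt[OF \<delta>]) (simp add: m_def)
      have "ereal tr \<le> phi u m \<xi>"
        unfolding phi_def
      proof (intro INF_greatest)
        fix \<nu> \<zeta> assume \<nu>: "\<nu> \<in> {m..}" and \<zeta>: "\<zeta> \<in> {\<zeta>. dist \<zeta> \<xi> < 1 / real (Suc m)}"
        have "fs \<nu> \<zeta> (xs \<nu>) < ereal (K - tr)"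
        proof -
          have "fs \<nu> \<zeta> (xs \<nu>) \<le> (SUP \<nu>\<in>{N..}. SUP \<zeta>\<in>{\<zeta>. dist \<zeta> \<xi> < \<delta>}. fs \<nu> \<zeta> (xs \<nu>))"
            using \<nu> \<zeta> m\<delta> unfolding m_def
            by (intro SUP_upper2[of \<nu>] SUP_upper) auto
          then show ?thesis using cN by (rule le_less_trans)
        qed
        then show "ereal tr \<le> u \<nu> \<zeta>" unfolding u_def
          by (cases "fs \<nu> \<zeta> (xs \<nu>)") (auto simp: min_def)
      qed
      also have "\<dots> \<le> psi u \<xi>" unfolding psi_def by (rule SUP_upper) simp
      finally show ?thesis unfolding tr .
    qed
  qed
qed


lemma enn_less_conv: "0 \<le> r \<Longrightarrow> (ennreal r < I) = (ereal r < enn2ereal I)"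
  by (metis enn2ereal_ennreal less_ennreal.rep_eq)

lemma core':
  fixes P :: "'c::metric_space measure" and Ps :: "nat \<Rightarrow> 'c measure"
  assumes P_prob: "prob_space P" and P_sets: "sets P = sets borel"
    and Ps_prob: "\<And>\<nu>. prob_space (Ps \<nu>)" and Ps_sets: "\<And>\<nu>. sets (Ps \<nu>) = sets borel"
    and weak: "weak_conv Ps P" and nn: "\<forall>\<nu> \<zeta>. 0 \<le> u \<nu> \<zeta>"
    and r: "ereal r < enn2ereal (\<integral>\<^sup>+ \<xi>. e2ennreal (psi u \<xi>) \<partial>P)"
  shows "eventually (\<lambda>\<nu>. ereal r < enn2ereal (\<integral>\<^sup>+ \<zeta>. e2ennreal (u \<nu> \<zeta>) \<partial>Ps \<nu>)) sequentially"
proof (cases "r < 0")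
  case True
  have "\<And>I. ereal r < enn2ereal I"
    by (rule less_le_trans[OF _ enn2ereal_nonneg]) (use True in simp)
  then show ?thesis by simp
next
  case False
  then have r0: "0 \<le> r" by simp
  have "ennreal r < (\<integral>\<^sup>+ \<xi>. e2ennreal (psi u \<xi>) \<partial>P)"
    using r unfolding enn_less_conv[OF r0] .
  from core[OF P_prob P_sets Ps_prob Ps_sets weak nn this]
  show ?thesis unfolding enn_less_conv[OF r0] .
qed
lemma ar1:
  assumes "ereal (r2 + K) < a" "- ereal (r2 - r1) < T"
  shows "ereal r1 < a - ereal K + T"
  using assms by (cases a; cases T) auto

lemma ar2:
  assumes "ereal (K - r1) < a" "Bv < ereal (r2 - r1)"
  shows "ereal K - a + Bv < ereal r2"
  using assms by (cases a; cases Bv) auto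

lemma ar3:
  assumes "ereal r2 < E" "E \<le> a - ereal K"
  shows "ereal (r2 + K) < a"
  using assms by (cases a; cases E) auto

lemma ar4:
  assumes "ereal K - a \<le> E" "E < ereal r1"
  shows "ereal (K - r1) < a"
  using assms by (cases a; cases E) auto

theorem theorem3p7:
  fixes P :: "'c::metric_space measure" and Ps :: "nat \<Rightarrow> 'c measure"
    and f :: "'c \<Rightarrow> 'x::metric_space \<Rightarrow> ereal"
    and fs :: "nat \<Rightarrow> 'c \<Rightarrow> 'x \<Rightarrow> ereal"
  assumes P_prob: "prob_space P" and P_sets: "sets P = sets borel"
    and Ps_prob: "\<And>\<nu>. prob_space (Ps \<nu>)" and Ps_sets: "\<And>\<nu>. sets (Ps \<nu>) = sets borel"
    and weak: "weak_conv Ps P"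
    and meas_f: "\<And>x. (\<lambda>\<xi>. f \<xi> x) \<in> borel_measurable borel"
    and meas_fs: "\<And>\<nu> x. (\<lambda>\<xi>. fs \<nu> \<xi> x) \<in> borel_measurable borel"
    and lower_ui: "\<And>x. Liminf at_top (\<lambda>K::real.
          liminf2 (\<lambda>\<nu> y. eexp (Ps \<nu>)
             (\<lambda>\<xi>. if fs \<nu> \<xi> y \<le> - ereal K then fs \<nu> \<xi> y else 0)) x) = 0"
    and lower_pw: "\<And>x. AE \<xi> in P. liminf3 (\<lambda>\<nu> y \<zeta>. fs \<nu> \<zeta> y) x \<xi> \<ge> f \<xi> x"
    and upper: "\<And>x. eexp P (\<lambda>\<xi>. f \<xi> x) = \<infinity> \<or>
          (\<exists>xs. xs \<longlonglongrightarrow> x \<and>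
             Limsup at_top (\<lambda>K::real. limsup (\<lambda>\<nu>. eexp (Ps \<nu>)
                (\<lambda>\<xi>. if fs \<nu> \<xi> (xs \<nu>) \<ge> ereal K then fs \<nu> \<xi> (xs \<nu>) else 0))) = 0 \<and>
             (AE \<xi> in P. limsup2 (\<lambda>\<nu> \<zeta>. fs \<nu> \<zeta> (xs \<nu>)) \<xi> \<le> f \<xi> x))"
  shows "epi_converges (\<lambda>\<nu> x. eexp (Ps \<nu>) (\<lambda>\<xi>. fs \<nu> \<xi> x)) (\<lambda>x. eexp P (\<lambda>\<xi>. f \<xi> x))"
proof -
  have mfs: "\<And>\<nu> x. (\<lambda>\<xi>. fs \<nu> \<xi> x) \<in> borel_measurable (Ps \<nu>)"
    by (simp add: measurable_cong_sets[OF Ps_sets refl] meas_fs)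
  have mf: "\<And>x. (\<lambda>\<xi>. f \<xi> x) \<in> borel_measurable P"
    by (simp add: measurable_cong_sets[OF P_sets refl] meas_f)
  have lower: "eexp P (\<lambda>\<xi>. f \<xi> x) \<le> liminf (\<lambda>\<nu>. eexp (Ps \<nu>) (\<lambda>\<xi>. fs \<nu> \<xi> (xs \<nu>)))"
    if xs: "xs \<longlonglongrightarrow> x" for x xs
    unfolding le_Liminf_iff
  proof (intro allI impI)
    fix y assume y: "y < eexp P (\<lambda>\<xi>. f \<xi> x)"
    obtain r1 where r1: "y < ereal r1" "ereal r1 < eexp P (\<lambda>\<xi>. f \<xi> x)" using ereal_dense2[OF y] by blast
    obtain r2 where r2: "ereal r1 < ereal r2" "ereal r2 < eexp P (\<lambda>\<xi>. f \<xi> x)" using ereal_dense2[OF r1(2)] by blast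
    define \<epsilon> where "\<epsilon> = r2 - r1"
    have \<epsilon>: "0 < \<epsilon>" using r2 unfolding \<epsilon>_def by simp
    define T where "T = (\<lambda>K \<nu> y. eexp (Ps \<nu>) (\<lambda>\<xi>. if fs \<nu> \<xi> y \<le> - ereal K then fs \<nu> \<xi> y else 0))"
    have "0 \<le> Liminf at_top (\<lambda>K::real. liminf2 (T K) x)" using lower_ui[of x] unfolding T_def by simp
    then have "eventually (\<lambda>K. - ereal \<epsilon> < liminf2 (T K) x) at_top"
      unfolding le_Liminf_iff using \<epsilon> by simp
    then obtain K0 where K0: "\<And>K. K \<ge> K0 \<Longrightarrow> - ereal \<epsilon> < liminf2 (T K) x"
      unfolding eventually_at_top_linorder by blast
    define K where "K = max K0 0"
    have K: "0 \<le> K" unfolding K_def by simp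
    have "- ereal \<epsilon> < liminf2 (T K) x" using K0 unfolding K_def by simp
    then obtain \<delta> N where \<delta>: "0 < \<delta>" and
      TN: "- ereal \<epsilon> < (INF \<nu>\<in>{N..}. INF y\<in>{y. dist y x < \<delta>}. T K \<nu> y)"
      unfolding liminf2_def by (auto simp: less_SUP_iff)
    obtain N' where N': "\<forall>n\<ge>N'. dist (xs n) x < \<delta>" using metric_LIMSEQ_D[OF xs \<delta>] by blast
    have evT: "eventually (\<lambda>\<nu>. - ereal \<epsilon> < T K \<nu> (xs \<nu>)) sequentially"
      unfolding eventually_sequentially
    proof (intro exI[of _ "max N N'"] allI impI)
      fix \<nu> assume "max N N' \<le> \<nu>"
      then have "(INF \<nu>\<in>{N..}. INF y\<in>{y. dist y x < \<delta>}. T K \<nu> y) \<le> T K \<nu> (xs \<nu>)"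
        using N' by (intro INF_lower2[of \<nu>] INF_lower) auto
      then show "- ereal \<epsilon> < T K \<nu> (xs \<nu>)" using TN by (rule less_le_trans[rotated])
    qed
    define u where "u = (\<lambda>\<nu> \<zeta>. max (fs \<nu> \<zeta> (xs \<nu>)) (- ereal K) + ereal K)"
    have nn: "\<forall>\<nu> \<zeta>. 0 \<le> u \<nu> \<zeta>"
    proof (intro allI)
      fix \<nu> \<zeta> show "0 \<le> u \<nu> \<zeta>" unfolding u_def by (cases "fs \<nu> \<zeta> (xs \<nu>)") (auto simp: max_def)
    qed
    have "(\<integral>\<^sup>+ \<xi>. e2ennreal (max (f \<xi> x) (- ereal K) + ereal K) \<partial>P) \<le> (\<integral>\<^sup>+ \<xi>. e2ennreal (psi u \<xi>) \<partial>P)"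
      using lower_pw[of x]
    proof (intro nn_integral_mono_AE, eventually_elim)
      case (elim \<xi>)
      have "f \<xi> x \<le> liminf3 (\<lambda>\<nu> y \<zeta>. fs \<nu> \<zeta> y) x \<xi>" using elim by blast
      then show ?case unfolding u_def by (intro e2ennreal_mono psi_lower[OF xs K])
    qed
    then have "enn2ereal (\<integral>\<^sup>+ \<xi>. e2ennreal (max (f \<xi> x) (- ereal K) + ereal K) \<partial>P) - ereal K
        \<le> enn2ereal (\<integral>\<^sup>+ \<xi>. e2ennreal (psi u \<xi>) \<partial>P) - ereal K"
      by (intro ereal_minus_mono) (auto simp: less_eq_ennreal.rep_eq)
    with LF[OF P_prob mf K] have "eexp P (\<lambda>\<xi>. f \<xi> x) \<le> enn2ereal (\<integral>\<^sup>+ \<xi>. e2ennreal (psi u \<xi>) \<partial>P) - ereal K"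
      by (rule order_trans)
    then have "ereal (r2 + K) < enn2ereal (\<integral>\<^sup>+ \<xi>. e2ennreal (psi u \<xi>) \<partial>P)"
      using r2(2) by (intro ar3) auto
    from core'[OF P_prob P_sets Ps_prob Ps_sets weak nn this] evT
    show "eventually (\<lambda>\<nu>. y < eexp (Ps \<nu>) (\<lambda>\<xi>. fs \<nu> \<xi> (xs \<nu>))) sequentially"
    proof eventually_elim
      case (elim \<nu>)
      have "ereal r1 < enn2ereal (\<integral>\<^sup>+ \<zeta>. e2ennreal (u \<nu> \<zeta>) \<partial>Ps \<nu>) - ereal K + T K \<nu> (xs \<nu>)"
        using elim unfolding \<epsilon>_def by (intro ar1) auto
      also have "\<dots> \<le> eexp (Ps \<nu>) (\<lambda>\<xi>. fs \<nu> \<xi> (xs \<nu>))"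
        unfolding u_def T_def by (rule LI[OF Ps_prob mfs K])
      finally show ?case using r1(1) by (rule less_trans[rotated])
    qed
  qed
  have upperlim: "limsup (\<lambda>\<nu>. eexp (Ps \<nu>) (\<lambda>\<xi>. fs \<nu> \<xi> (xs \<nu>))) \<le> eexp P (\<lambda>\<xi>. f \<xi> x)"
    if xs: "xs \<longlonglongrightarrow> x"
      and ui: "Limsup at_top (\<lambda>K::real. limsup (\<lambda>\<nu>. eexp (Ps \<nu>)
                (\<lambda>\<xi>. if fs \<nu> \<xi> (xs \<nu>) \<ge> ereal K then fs \<nu> \<xi> (xs \<nu>) else 0))) = 0"
      and pw: "AE \<xi> in P. limsup2 (\<lambda>\<nu> \<zeta>. fs \<nu> \<zeta> (xs \<nu>)) \<xi> \<le> f \<xi> x"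
    for x xs
    unfolding Limsup_le_iff
  proof (intro allI impI)
    fix y assume y: "eexp P (\<lambda>\<xi>. f \<xi> x) < y"
    obtain r1 where r1: "eexp P (\<lambda>\<xi>. f \<xi> x) < ereal r1" "ereal r1 < y" using ereal_dense2[OF y] by blast
    obtain r2 where r2: "ereal r1 < ereal r2" "ereal r2 < y" using ereal_dense2[OF r1(2)] by blast
    define \<epsilon> where "\<epsilon> = r2 - r1"
    have \<epsilon>: "0 < \<epsilon>" using r2 unfolding \<epsilon>_def by simp
    define B where "B = (\<lambda>K \<nu>. eexp (Ps \<nu>) (\<lambda>\<xi>. if ereal K \<le> fs \<nu> \<xi> (xs \<nu>) then fs \<nu> \<xi> (xs \<nu>) else 0))"
    have "Limsup at_top (\<lambda>K::real. limsup (B K)) \<le> 0" using ui unfolding B_def by simp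
    then have "eventually (\<lambda>K. limsup (B K) < ereal \<epsilon>) at_top"
      unfolding Limsup_le_iff using \<epsilon> by simp
    then obtain K0 where K0: "\<And>K. K \<ge> K0 \<Longrightarrow> limsup (B K) < ereal \<epsilon>"
      unfolding eventually_at_top_linorder by blast
    define K where "K = max K0 0"
    have K: "0 \<le> K" unfolding K_def by simp
    have "limsup (B K) < ereal \<epsilon>" using K0 unfolding K_def by simp
    then have evB: "eventually (\<lambda>\<nu>. B K \<nu> < ereal \<epsilon>) sequentially"
      using Limsup_le_iff[of sequentially "B K" "limsup (B K)"] by blast
    define w where "w = (\<lambda>\<nu> \<zeta>. ereal K - min (fs \<nu> \<zeta> (xs \<nu>)) (ereal K))"
    have nn: "\<forall>\<nu> \<zeta>. 0 \<le> w \<nu> \<zeta>"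
    proof (intro allI)
      fix \<nu> \<zeta> show "0 \<le> w \<nu> \<zeta>" unfolding w_def by (cases "fs \<nu> \<zeta> (xs \<nu>)") (auto simp: min_def)
    qed
    have "(\<integral>\<^sup>+ \<xi>. e2ennreal (ereal K - min (f \<xi> x) (ereal K)) \<partial>P) \<le> (\<integral>\<^sup>+ \<xi>. e2ennreal (psi w \<xi>) \<partial>P)"
      using pw
    proof (intro nn_integral_mono_AE, eventually_elim)
      case (elim \<xi>)
      have "limsup2 (\<lambda>\<nu> \<zeta>. fs \<nu> \<zeta> (xs \<nu>)) \<xi> \<le> f \<xi> x" using elim by blast
      then show ?case unfolding w_def by (intro e2ennreal_mono psi_upper[OF K])
    qed
    then have "ereal K - enn2ereal (\<integral>\<^sup>+ \<xi>. e2ennreal (psi w \<xi>) \<partial>P)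
        \<le> ereal K - enn2ereal (\<integral>\<^sup>+ \<xi>. e2ennreal (ereal K - min (f \<xi> x) (ereal K)) \<partial>P)"
      by (intro ereal_minus_mono) (auto simp: less_eq_ennreal.rep_eq)
    also have "\<dots> \<le> eexp P (\<lambda>\<xi>. f \<xi> x)" by (rule UF[OF P_prob mf K])
    finally have "ereal (K - r1) < enn2ereal (\<integral>\<^sup>+ \<xi>. e2ennreal (psi w \<xi>) \<partial>P)"
      using r1(1) by (intro ar4) auto
    from core'[OF P_prob P_sets Ps_prob Ps_sets weak nn this] evB
    show "eventually (\<lambda>\<nu>. eexp (Ps \<nu>) (\<lambda>\<xi>. fs \<nu> \<xi> (xs \<nu>)) < y) sequentially"
    proof eventually_elim
      case (elim \<nu>)
      have "eexp (Ps \<nu>) (\<lambda>\<xi>. fs \<nu> \<xi> (xs \<nu>)) \<le> ereal K - enn2ereal (\<integral>\<^sup>+ \<zeta>. e2ennreal (w \<nu> \<zeta>) \<partial>Ps \<nu>) + B K \<nu>"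
        unfolding w_def B_def by (rule UI[OF Ps_prob mfs K])
      also have "\<dots> < ereal r2"
        using elim unfolding \<epsilon>_def by (intro ar2) auto
      finally show ?case using r2(2) by (rule less_trans)
    qed
  qed
  show ?thesis
    unfolding epi_converges_def
  proof (rule allI, rule conjI)
    fix x
    show "\<forall>xs. xs \<longlonglongrightarrow> x \<longrightarrow> eexp P (\<lambda>\<xi>. f \<xi> x) \<le> liminf (\<lambda>\<nu>. eexp (Ps \<nu>) (\<lambda>\<xi>. fs \<nu> \<xi> (xs \<nu>)))"
      using lower by blast
    show "\<exists>xs. xs \<longlonglongrightarrow> x \<and> (\<lambda>\<nu>. eexp (Ps \<nu>) (\<lambda>\<xi>. fs \<nu> \<xi> (xs \<nu>))) \<longlonglongrightarrow> eexp P (\<lambda>\<xi>. f \<xi> x)"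
      using upper[of x]
    proof (elim disjE exE conjE)
      assume inf: "eexp P (\<lambda>\<xi>. f \<xi> x) = \<infinity>"
      define xs where "xs = (\<lambda>\<nu>::nat. x)"
      have xs: "xs \<longlonglongrightarrow> x" unfolding xs_def by simp
      have li: "liminf (\<lambda>\<nu>. eexp (Ps \<nu>) (\<lambda>\<xi>. fs \<nu> \<xi> (xs \<nu>))) = \<infinity>"
        using lower[OF xs] inf by (simp add: top.extremum_unique[symmetric])
      have ls: "limsup (\<lambda>\<nu>. eexp (Ps \<nu>) (\<lambda>\<xi>. fs \<nu> \<xi> (xs \<nu>))) = \<infinity>"
        using Liminf_le_Limsup[of sequentially "\<lambda>\<nu>. eexp (Ps \<nu>) (\<lambda>\<xi>. fs \<nu> \<xi> (xs \<nu>))"] li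
        by (simp add: top.extremum_unique[symmetric])
      show ?thesis using Liminf_eq_Limsup[OF _ li ls] xs inf by auto
    next
      fix xs assume xs: "xs \<longlonglongrightarrow> x"
        and ui: "Limsup at_top (\<lambda>K::real. limsup (\<lambda>\<nu>. eexp (Ps \<nu>)
                (\<lambda>\<xi>. if fs \<nu> \<xi> (xs \<nu>) \<ge> ereal K then fs \<nu> \<xi> (xs \<nu>) else 0))) = 0"
        and pw: "AE \<xi> in P. limsup2 (\<lambda>\<nu> \<zeta>. fs \<nu> \<zeta> (xs \<nu>)) \<xi> \<le> f \<xi> x"
      have a: "eexp P (\<lambda>\<xi>. f \<xi> x) \<le> liminf (\<lambda>\<nu>. eexp (Ps \<nu>) (\<lambda>\<xi>. fs \<nu> \<xi> (xs \<nu>)))"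
        by (rule lower[OF xs])
      have b: "limsup (\<lambda>\<nu>. eexp (Ps \<nu>) (\<lambda>\<xi>. fs \<nu> \<xi> (xs \<nu>))) \<le> eexp P (\<lambda>\<xi>. f \<xi> x)"
        by (rule upperlim[OF xs ui pw])
      have c: "liminf (\<lambda>\<nu>. eexp (Ps \<nu>) (\<lambda>\<xi>. fs \<nu> \<xi> (xs \<nu>))) \<le> limsup (\<lambda>\<nu>. eexp (Ps \<nu>) (\<lambda>\<xi>. fs \<nu> \<xi> (xs \<nu>)))"
        by (rule Liminf_le_Limsup) simp
      have "(\<lambda>\<nu>. eexp (Ps \<nu>) (\<lambda>\<xi>. fs \<nu> \<xi> (xs \<nu>))) \<longlonglongrightarrow> eexp P (\<lambda>\<xi>. f \<xi> x)"
        by (rule Liminf_eq_Limsup) (use a b c in auto)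
      then show ?thesis using xs by blast
    qed
  qed
qed


end
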